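(* Suppose $f\in L^1_{loc}(\mathbb{R}^n)$ and $x_0,\dots,x_{n+1}\in\mathbb{R}^n$. Then \[ \mathcal{H}^{n+1}(\Delta(F(x_0),\dots,F(x_{n+1})))\le C\,\Omega_f\big(x_0,2\,\mathrm{diam}(x_0,\dots,x_{n+1})\big)\,\mathrm{diam}(x_0,\dots,x_{n+1})^n, \] where $C=C(n)$.
   Context: $F(x)=(x,f(x))\in\mathbb{R}^{n+1}$; $\Delta(\cdot)$ denotes convex hull, $\mathcal{H}^{n+1}$ the $(n+1)$-dimensional Hausdorff measure in $\mathbb{R}^{n+1}$, and $\mathrm{diam}(x_0,\dots,x_{n+1})=\max_{i,j}|x_i-x_j|$. For a locally integrable $f$ and a cube $Q\subset\mathbb{R}^n$, $P_Qf$ denotes the unique affine function with $\int_Q(f-P_Qf)\,dx=0$ and $\int_Q(f-P_Qf)x_i\,dx=0$ for $i=1,\dots,n$. For $x\in\mathbb{R}^n$, $t>0$, $\Omega_f(x,t)=\sup_Q\lVert f-P_Qf\rVert_{L^\infty(Q)}$, the supremum over all cubes $Q\subset\mathbb{R}^n$ of sidelength $t$ with $x\in Q$.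
   Formalization: In $\Omega_f(x,t)$ the quantity $\lVert f-P_Qf\rVert_{L^\infty(Q)}$ is replaced by the pointwise supremum of the absolute value of $f-P_Qf$ over the closed cube Q, not the essential supremum. The statement above fails without it. *)

theory Defs
  imports "HOL-Analysis.Analysis"
begin

definition affine_fun :: "('a::euclidean_space \<Rightarrow> real) \<Rightarrow> bool" where
  "affine_fun g \<longleftrightarrow> (\<exists>c l. g = (\<lambda>x. c + l \<bullet> x))"

definition loc_integrable :: "('a::euclidean_space \<Rightarrow> real) \<Rightarrow> bool" where
  "loc_integrable f \<longleftrightarrow> (\<forall>a b. f absolutely_integrable_on cbox a b)"

definition cube :: "'a::euclidean_space \<Rightarrow> real \<Rightarrow> 'a set" where
  "cube a t = cbox a (a + t *\<^sub>R One)"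

definition PQ :: "('a::euclidean_space \<Rightarrow> real) \<Rightarrow> 'a set \<Rightarrow> ('a \<Rightarrow> real)" where
  "PQ f Q = (THE g. affine_fun g \<and> integral Q (\<lambda>x. f x - g x) = 0 \<and>
       (\<forall>i\<in>Basis. integral Q (\<lambda>x. (f x - g x) * (x \<bullet> i)) = 0))"

text \<open>Omega_f(x,t): sup over cubes Q of sidelength t containing x of sup_Q |f - P_Q f|
  (valued in extended reals, since it may be infinite).\<close>
definition Omega :: "('a::euclidean_space \<Rightarrow> real) \<Rightarrow> 'a \<Rightarrow> real \<Rightarrow> ereal" where
  "Omega f x t = (SUP Q \<in> {cube a t | a. x \<in> cube a t}. SUP y \<in> Q. ereal \<bar>f y - PQ f Q y\<bar>)"

end

theory Submission
  imports Defs
begin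


lemma aff_zero:
  fixes a b l :: "'a::euclidean_space" and c :: real
  assumes ne: "box a b \<noteq> {}"
    and i0: "integral (cbox a b) (\<lambda>x. c + l \<bullet> x) = 0"
    and i1: "\<forall>i\<in>Basis. integral (cbox a b) (\<lambda>x. (c + l \<bullet> x) * (x \<bullet> i)) = 0"
  shows "c = 0 \<and> l = 0"
proof -
  define h where "h x = c + l \<bullet> x" for x
  have ch: "continuous_on (cbox a b) h" unfolding h_def by (intro continuous_intros)
  have chi: "continuous_on (cbox a b) (\<lambda>x. h x * (x \<bullet> i))" for i unfolding h_def by (intro continuous_intros)
  have eq: "h x * h x = c * h x + (\<Sum>i\<in>Basis. (l \<bullet> i) * (h x * (x \<bullet> i)))" for x
  proof -
    have "h x * h x = h x * c + h x * (l \<bullet> x)" unfolding h_def by (simp add: algebra_simps)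
    also have "l \<bullet> x = (\<Sum>i\<in>Basis. (l \<bullet> i) * (x \<bullet> i))" by (rule euclidean_inner)
    finally show ?thesis by (simp add: sum_distrib_left algebra_simps)
  qed
  have "integral (cbox a b) (\<lambda>x. h x * h x) = c * integral (cbox a b) h + (\<Sum>i\<in>Basis. (l \<bullet> i) * integral (cbox a b) (\<lambda>x. h x * (x \<bullet> i)))"
  proof -
    have ii: "(\<lambda>x. (l \<bullet> i) * (h x * (x \<bullet> i))) integrable_on cbox a b" for i
      using chi[of i] ch by (intro integrable_continuous continuous_intros) auto
    have i1: "(\<lambda>x. c * h x) integrable_on cbox a b"
      using ch by (intro integrable_continuous continuous_intros) auto
    have i2: "(\<lambda>x. \<Sum>i\<in>Basis. (l \<bullet> i) * (h x * (x \<bullet> i))) integrable_on cbox a b"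
      using ii by (intro integrable_sum) auto
    have "integral (cbox a b) (\<lambda>x. h x * h x) = integral (cbox a b) (\<lambda>x. c * h x) + integral (cbox a b) (\<lambda>x. \<Sum>i\<in>Basis. (l \<bullet> i) * (h x * (x \<bullet> i)))"
      unfolding eq by (rule integral_add[OF i1 i2])
    also have "\<dots> = c * integral (cbox a b) h + (\<Sum>i\<in>Basis. integral (cbox a b) (\<lambda>x. (l \<bullet> i) * (h x * (x \<bullet> i))))"
      using ii by (subst integral_sum) auto
    finally show ?thesis by simp
  qed
  also have "\<dots> = 0" using i0 i1 unfolding h_def by simp
  finally have z: "((\<lambda>x. h x * h x) has_integral 0) (cbox a b)"
    by (metis ch continuous_on_mult integrable_continuous integrable_integral)
  have hz: "h x = 0" if "x \<in> cbox a b" for x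
    using has_integral_0_cbox_imp_0[OF continuous_on_mult[OF ch ch] _ z ne that] by simp
  have ab: "\<forall>i\<in>Basis. a \<bullet> i < b \<bullet> i" using ne by (simp add: box_ne_empty)
  have a_in: "a \<in> cbox a b" using ab by (auto simp: mem_box less_imp_le)
  have li: "l \<bullet> i = 0" if i: "i \<in> Basis" for i
  proof -
    define t where "t = b \<bullet> i - a \<bullet> i"
    have t: "t > 0" using ab i by (simp add: t_def)
    have "a + t *\<^sub>R i \<in> cbox a b" using ab i
      by (auto simp: mem_box t_def inner_add_left inner_Basis less_imp_le)
    then have "h (a + t *\<^sub>R i) = 0" by (rule hz)
    moreover have "h a = 0" using a_in hz by blast
    moreover have "h (a + t *\<^sub>R i) = h a + t * (l \<bullet> i)" by (simp add: h_def inner_add_right)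
    ultimately have "t * (l \<bullet> i) = 0" by simp
    then show ?thesis using t by simp
  qed
  have "l = 0" by (rule euclidean_eqI) (simp add: li)
  moreover have "c = 0" using hz[OF a_in] \<open>l = 0\<close> by (simp add: h_def)
  ultimately show ?thesis by simp
qed



lemma coef_basis:
  fixes c :: "'a::euclidean_space \<Rightarrow> real"
  assumes "j \<in> Basis" shows "(\<Sum>i\<in>Basis. c i *\<^sub>R i) \<bullet> j = c j"
  using assms by (simp add: inner_sum_left inner_Basis if_distrib sum.delta cong: if_cong)

lemma PQ_affine:
  fixes f :: "'a::euclidean_space \<Rightarrow> real"
  assumes fa: "f absolutely_integrable_on cbox a b" and ne: "box a b \<noteq> {}"
  shows "affine_fun (PQ f (cbox a b))"
proof -
  let ?Q = "cbox a b"
  have fint: "f integrable_on ?Q" using fa absolutely_integrable_on_def by blast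
  have fxi: "(\<lambda>x. f x * (x \<bullet> i)) integrable_on ?Q" for i
  proof -
    have "(\<lambda>x. (x \<bullet> i) * f x) absolutely_integrable_on ?Q"
    proof (rule absolutely_integrable_bounded_measurable_product[OF bilinear_times])
      show "(\<lambda>x. x \<bullet> i) \<in> borel_measurable (lebesgue_on ?Q)"
        by (intro continuous_imp_measurable_on_sets_lebesgue continuous_intros) auto
      show "?Q \<in> sets lebesgue" by auto
      show "bounded ((\<lambda>x. x \<bullet> i) ` ?Q)"
        by (intro compact_imp_bounded compact_continuous_image continuous_intros compact_cbox)
    qed (rule fa)
    then show ?thesis by (simp add: mult.commute absolutely_integrable_on_def)
  qed
  have cint: "(\<lambda>x. (c + l \<bullet> x) * w x) integrable_on ?Q" if "continuous_on ?Q w" for c l w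
    by (intro integrable_continuous continuous_intros that)
  have gint1: "(\<lambda>x. f x - (c + l \<bullet> x)) integrable_on ?Q" for c l
    using integrable_diff[OF fint cint[of "\<lambda>_. 1" c l]] by simp
  have gint2: "(\<lambda>x. (f x - (c + l \<bullet> x)) * (x \<bullet> i)) integrable_on ?Q" for c l i
    using integrable_diff[OF fxi[of i] cint[of "\<lambda>x. x \<bullet> i" c l]]
    by (simp add: algebra_simps continuous_intros)
  define P where "P g \<longleftrightarrow> affine_fun g \<and> integral ?Q (\<lambda>x. f x - g x) = 0 \<and>
       (\<forall>i\<in>Basis. integral ?Q (\<lambda>x. (f x - g x) * (x \<bullet> i)) = 0)" for g
  have uniq: "g1 = g2" if "P g1" "P g2" for g1 g2
  proof -
    obtain c1 l1 where g1: "g1 = (\<lambda>x. c1 + l1 \<bullet> x)" using \<open>P g1\<close> unfolding P_def affine_fun_def by blast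
    obtain c2 l2 where g2: "g2 = (\<lambda>x. c2 + l2 \<bullet> x)" using \<open>P g2\<close> unfolding P_def affine_fun_def by blast
    have e0: "(\<lambda>x. (c1 - c2) + (l1 - l2) \<bullet> x) = (\<lambda>x. (f x - (c2 + l2 \<bullet> x)) - (f x - (c1 + l1 \<bullet> x)))"
      by (auto simp: algebra_simps inner_diff_left)
    have e1: "(\<lambda>x. ((c1 - c2) + (l1 - l2) \<bullet> x) * (x \<bullet> i)) = (\<lambda>x. (f x - (c2 + l2 \<bullet> x)) * (x \<bullet> i) - (f x - (c1 + l1 \<bullet> x)) * (x \<bullet> i))" for i
      by (auto simp: algebra_simps inner_diff_left)
    have "c1 - c2 = 0 \<and> l1 - l2 = 0"
    proof (rule aff_zero[OF ne])
      show "integral ?Q (\<lambda>x. (c1 - c2) + (l1 - l2) \<bullet> x) = 0"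
        unfolding e0 using that unfolding P_def g1 g2
        by (subst integral_diff[OF gint1 gint1]) simp
      show "\<forall>i\<in>Basis. integral ?Q (\<lambda>x. ((c1 - c2) + (l1 - l2) \<bullet> x) * (x \<bullet> i)) = 0"
        unfolding e1 using that unfolding P_def g1 g2
        by (subst integral_diff[OF gint2 gint2]) simp
    qed
    then show ?thesis using g1 g2 by simp
  qed
  define \<phi> where "\<phi> p x = fst p + snd p \<bullet> x" for p :: "real \<times> 'a" and x
  define T where "T p = (integral ?Q (\<phi> p), \<Sum>i\<in>Basis. integral ?Q (\<lambda>x. \<phi> p x * (x \<bullet> i)) *\<^sub>R i)" for p
  have phiint: "(\<lambda>x. \<phi> p x * w x) integrable_on ?Q" if "continuous_on ?Q w" for p w
    unfolding \<phi>_def by (rule cint[OF that])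
  have add: "integral ?Q (\<lambda>x. \<phi> (p + q) x * w x) = integral ?Q (\<lambda>x. \<phi> p x * w x) + integral ?Q (\<lambda>x. \<phi> q x * w x)"
    if "continuous_on ?Q w" for p q w
  proof -
    have "(\<lambda>x. \<phi> (p + q) x * w x) = (\<lambda>x. \<phi> p x * w x + \<phi> q x * w x)"
      by (auto simp: \<phi>_def algebra_simps inner_add_left)
    then show ?thesis using integral_add[OF phiint[OF that] phiint[OF that]] by simp
  qed
  have scl: "integral ?Q (\<lambda>x. \<phi> (r *\<^sub>R p) x * w x) = r * integral ?Q (\<lambda>x. \<phi> p x * w x)" for r p w
  proof -
    have "(\<lambda>x. \<phi> (r *\<^sub>R p) x * w x) = (\<lambda>x. r * (\<phi> p x * w x))"
      by (auto simp: \<phi>_def algebra_simps)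
    then show ?thesis by simp
  qed
  have c1: "continuous_on ?Q (\<lambda>x::'a. 1::real)" by (intro continuous_intros)
  have ci: "continuous_on ?Q (\<lambda>x::'a. x \<bullet> i)" for i by (intro continuous_intros)
  have phiint0: "\<phi> p integrable_on ?Q" for p using phiint[OF c1, of p] by simp
  have lin: "linear T"
  proof (rule linearI)
    fix p q show "T (p + q) = T p + T q"
      using add[OF c1, of p q] add[OF ci]
      by (simp add: T_def sum.distrib scaleR_add_left)
  next
    fix r p show "T (r *\<^sub>R p) = r *\<^sub>R T p"
      using scl[of r p "\<lambda>_. 1"] scl[of r p]
      by (simp add: T_def scaleR_sum_right)
  qed
  have inj: "inj T"
  proof -
    have "p = 0" if "T p = 0" for p
    proof -
      have i0: "integral ?Q (\<lambda>x. fst p + snd p \<bullet> x) = 0"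
      proof -
        have "fst (T p) = 0" using that by simp
        moreover have "\<phi> p = (\<lambda>x. fst p + snd p \<bullet> x)" by (auto simp: \<phi>_def)
        ultimately show ?thesis by (simp add: T_def)
      qed
      have "\<forall>i\<in>Basis. integral ?Q (\<lambda>x. (fst p + snd p \<bullet> x) * (x \<bullet> i)) = 0"
      proof
        fix j :: 'a assume j: "j \<in> Basis"
        have "(\<Sum>i\<in>Basis. integral ?Q (\<lambda>x. \<phi> p x * (x \<bullet> i)) *\<^sub>R i) = 0"
        proof -
          have "snd (T p) = 0" using that by simp
          then show ?thesis by (simp add: T_def)
        qed
        then have "(\<Sum>i\<in>Basis. integral ?Q (\<lambda>x. \<phi> p x * (x \<bullet> i)) *\<^sub>R i) \<bullet> j = 0" by simp
        then show "integral ?Q (\<lambda>x. (fst p + snd p \<bullet> x) * (x \<bullet> j)) = 0"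
          by (simp add: coef_basis[OF j] \<phi>_def)
      qed
      from aff_zero[OF ne i0 this] show ?thesis by (simp add: prod_eq_iff)
    qed
    then show ?thesis using lin by (simp add: linear_injective_0)
  qed
  have "surj T" using lin inj linear_injective_imp_surjective by blast
  then obtain p where p: "T p = (integral ?Q f, \<Sum>i\<in>Basis. integral ?Q (\<lambda>x. f x * (x \<bullet> i)) *\<^sub>R i)"
    by (metis surjD)
  have "P (\<phi> p)"
    unfolding P_def
  proof (intro conjI ballI)
    show "affine_fun (\<phi> p)" unfolding affine_fun_def \<phi>_def by blast
    have "integral ?Q (\<phi> p) = integral ?Q f" using p by (simp add: T_def)
    then show "integral ?Q (\<lambda>x. f x - \<phi> p x) = 0"
      using integral_diff[OF fint phiint0] by simp
  next
    fix j :: 'a assume j: "j \<in> Basis"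
    have "(\<Sum>i\<in>Basis. integral ?Q (\<lambda>x. \<phi> p x * (x \<bullet> i)) *\<^sub>R i) \<bullet> j
        = (\<Sum>i\<in>Basis. integral ?Q (\<lambda>x. f x * (x \<bullet> i)) *\<^sub>R i) \<bullet> j"
      using p by (simp add: T_def)
    then have e: "integral ?Q (\<lambda>x. \<phi> p x * (x \<bullet> j)) = integral ?Q (\<lambda>x. f x * (x \<bullet> j))"
      by (simp add: coef_basis[OF j])
    have "(\<lambda>x. (f x - \<phi> p x) * (x \<bullet> j)) = (\<lambda>x. f x * (x \<bullet> j) - \<phi> p x * (x \<bullet> j))"
      by (auto simp: algebra_simps)
    then show "integral ?Q (\<lambda>x. (f x - \<phi> p x) * (x \<bullet> j)) = 0"
      using integral_diff[OF fxi phiint[OF ci]] e by simp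
  qed
  have "(THE g. P g) = \<phi> p"
    by (rule the_equality[of P "\<phi> p"]) (use \<open>P (\<phi> p)\<close> uniq in blast)+
  moreover have "PQ f ?Q = (THE g. P g)" by (simp add: PQ_def P_def)
  ultimately show ?thesis using \<open>P (\<phi> p)\<close> by (simp add: P_def)
qed



lemma vol_bound:
  fixes a b l :: "'a::euclidean_space" and c w :: real and S :: "('a \<times> real) set"
  assumes w: "w \<ge> 0" and S: "finite S"
    and pts: "\<And>p. p \<in> S \<Longrightarrow> fst p \<in> cbox a b \<and> \<bar>snd p - (c + l \<bullet> fst p)\<bar> \<le> w"
    and ab: "\<forall>i\<in>Basis. a \<bullet> i \<le> b \<bullet> i"
  shows "measure lebesgue (convex hull S) \<le> 2 * w * (\<Prod>i\<in>Basis. (b - a) \<bullet> i)"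
proof -
  define K where "K = (cbox a b \<times> UNIV) \<inter> {p. (- l, 1::real) \<bullet> p \<le> c + w} \<inter> {p. (l, -1::real) \<bullet> p \<le> w - c}"
  have convK: "convex K" unfolding K_def
    by (intro convex_Int convex_Times convex_box convex_UNIV convex_halfspace_le)
  have closedK: "closed K" unfolding K_def
    by (intro closed_Int closed_Times closed_cbox closed_UNIV closed_halfspace_le)
  have SK: "S \<subseteq> K"
  proof
    fix p assume "p \<in> S"
    from pts[OF this] show "p \<in> K" unfolding K_def
      by (cases p) (auto simp: inner_minus_left)
  qed
  have hK: "convex hull S \<subseteq> K" by (rule hull_minimal[where S=convex, OF SK convK])
  have Kb: "K \<in> sets lborel" using closedK by (simp add: borel_closed)
  have slice: "Pair x -` K = (if x \<in> cbox a b then {c + l \<bullet> x - w .. c + l \<bullet> x + w} else {})" for x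
    by (auto simp: K_def inner_minus_left)
  have "emeasure lborel K = emeasure (lborel \<Otimes>\<^sub>M lborel) K" by (simp add: lborel_prod)
  also have "\<dots> = (\<integral>\<^sup>+x. emeasure lborel (Pair x -` K) \<partial>lborel)"
    by (intro lborel.emeasure_pair_measure_alt) (simp only: lborel_prod Kb)
  also have "\<dots> = (\<integral>\<^sup>+x. ennreal (2 * w) * indicator (cbox a b) x \<partial>lborel)"
  proof (intro nn_integral_cong)
    fix x :: 'a
    have e: "(c + l \<bullet> x + w) - (c + l \<bullet> x - w) = 2 * w" by simp
    show "emeasure lborel (Pair x -` K) = ennreal (2 * w) * indicator (cbox a b) x"
      using w by (auto simp: slice indicator_def emeasure_lborel_Icc e)
  qed
  also have "\<dots> = ennreal (2 * w) * emeasure lborel (cbox a b)"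
    by (intro nn_integral_cmult_indicator) simp
  also have "\<dots> = ennreal (2 * w * (\<Prod>i\<in>Basis. (b - a) \<bullet> i))"
    using ab w by (simp add: emeasure_lborel_cbox_eq ennreal_mult prod_nonneg inner_diff_left)
  finally have eK: "emeasure lborel K = ennreal (2 * w * (\<Prod>i\<in>Basis. (b - a) \<bullet> i))" .
  have "emeasure lebesgue (convex hull S) \<le> emeasure lebesgue K"
    using hK Kb by (intro emeasure_mono) auto
  also have "\<dots> = emeasure lborel K" using Kb by simp
  finally have "emeasure lebesgue (convex hull S) \<le> ennreal (2 * w * (\<Prod>i\<in>Basis. (b - a) \<bullet> i))"
    using eK by simp
  then show ?thesis unfolding measure_def
    using ab w by (intro enn2real_leI) (auto intro!: mult_nonneg_nonneg prod_nonneg simp: inner_diff_left)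
qed



theorem lemma3p2:
  "\<exists>C::real. C > 0 \<and>
     (\<forall>(f::'a::euclidean_space \<Rightarrow> real) (x::nat \<Rightarrow> 'a).
        loc_integrable f \<longrightarrow>
        ereal (measure lebesgue (convex hull ((\<lambda>i. (x i, f (x i))) ` {0..DIM('a)+1})))
          \<le> ereal C * Omega f (x 0) (2 * diameter (x ` {0..DIM('a)+1}))
              * ereal (diameter (x ` {0..DIM('a)+1}) ^ DIM('a)))"
proof (intro exI[where x="2 ^ (DIM('a)+1)"] conjI allI impI)
  show "0 < (2::real) ^ (DIM('a)+1)" by simp
  fix f :: "'a \<Rightarrow> real" and x :: "nat \<Rightarrow> 'a" assume fl: "loc_integrable f"
  define n where "n = DIM('a)"
  define I where "I = {0..DIM('a)+1}"
  define d where "d = diameter (x ` I)"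
  define S where "S = (\<lambda>i. (x i, f (x i))) ` I"
  define C :: real where "C = 2 ^ (DIM('a)+1)"
  have I0: "0 \<in> I" by (simp add: I_def)
  have finI: "finite I" by (simp add: I_def)
  have bX: "bounded (x ` I)" using finI by (simp add: finite_imp_bounded)
  have dist: "dist (x i) (x 0) \<le> d" if "i \<in> I" for i
    unfolding d_def using bX that I0 by (intro diameter_bounded_bound) auto
  have d0: "d \<ge> 0" using dist[OF I0] by simp
  have npos: "n > 0" by (simp add: n_def)
  have main: "ereal (measure lebesgue (convex hull S)) \<le> ereal C * Omega f (x 0) (2 * d) * ereal (d ^ n)"
  proof (cases "d = 0")
    case True
    have "measure lebesgue (convex hull S) \<le> 2 * 0 * (\<Prod>i\<in>Basis. (x 0 - x 0) \<bullet> i)"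
    proof (rule vol_bound[where c="f (x 0)" and l=0])
      show "finite S" using finI by (simp add: S_def)
      fix p assume "p \<in> S"
      then obtain i where i: "i \<in> I" and p: "p = (x i, f (x i))" by (auto simp: S_def)
      have "x i = x 0" using dist[OF i] True by simp
      then show "fst p \<in> cbox (x 0) (x 0) \<and> \<bar>snd p - (f (x 0) + 0 \<bullet> fst p)\<bar> \<le> 0" by (simp add: p)
    qed auto
    then have "measure lebesgue (convex hull S) \<le> 0" by simp
    moreover have "ereal C * Omega f (x 0) (2 * d) * ereal (d ^ n) = 0" using True npos by (simp add: zero_ereal_def[symmetric])
    ultimately show ?thesis by (metis ereal_less_eq(3) zero_ereal_def)
  next
    case False
    then have dpos: "d > 0" using d0 by simp
    define a0 where "a0 = x 0 - d *\<^sub>R One"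
    define b0 where "b0 = a0 + (2 * d) *\<^sub>R (One::'a)"
    define Q where "Q = cube a0 (2 * d)"
    have Qeq: "Q = cbox a0 b0" by (simp add: Q_def cube_def b0_def)
    have xin: "x i \<in> Q" if "i \<in> I" for i
    proof -
      have "\<bar>(x i - x 0) \<bullet> e\<bar> \<le> d" if "e \<in> Basis" for e
        using Basis_le_norm[OF that, of "x i - x 0"] dist[OF \<open>i \<in> I\<close>] by (simp add: dist_norm)
      then have h: "x 0 \<bullet> e - d \<le> x i \<bullet> e \<and> x i \<bullet> e \<le> x 0 \<bullet> e + d" if "e \<in> Basis" for e
        using that by (fastforce simp: inner_diff_left abs_le_iff)
      show ?thesis unfolding Qeq mem_box
      proof (intro ballI conjI)
        fix e :: 'a assume e: "e \<in> Basis"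
        show "a0 \<bullet> e \<le> x i \<bullet> e" using h[OF e] e by (simp add: a0_def inner_diff_left)
        show "x i \<bullet> e \<le> b0 \<bullet> e" using h[OF e] e by (simp add: a0_def b0_def inner_diff_left inner_add_left)
      qed
    qed
    have ab: "\<forall>e\<in>Basis. a0 \<bullet> e \<le> b0 \<bullet> e" using dpos by (simp add: b0_def inner_add_left)
    have ne: "box a0 b0 \<noteq> {}" using dpos by (simp add: box_ne_empty b0_def inner_add_left)
    have fa: "f absolutely_integrable_on cbox a0 b0" using fl by (simp add: loc_integrable_def)
    have "affine_fun (PQ f Q)" unfolding Qeq by (rule PQ_affine[OF fa ne])
    then obtain c l where g: "PQ f Q = (\<lambda>x. c + l \<bullet> x)" by (auto simp: affine_fun_def)
    have Om: "ereal \<bar>f (x i) - (c + l \<bullet> x i)\<bar> \<le> Omega f (x 0) (2 * d)" if "i \<in> I" for i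
      unfolding Omega_def
    proof (rule SUP_upper2[where i=Q])
      show "Q \<in> {cube a (2 * d) |a. x 0 \<in> cube a (2 * d)}" using xin[OF I0] by (auto simp: Q_def)
      show "ereal \<bar>f (x i) - (c + l \<bullet> x i)\<bar> \<le> (SUP y\<in>Q. ereal \<bar>f y - PQ f Q y\<bar>)"
        using xin[OF that] by (auto intro!: SUP_upper2[where i="x i"] simp: g)
    qed
    show ?thesis
    proof (cases "Omega f (x 0) (2 * d)")
      case (real w)
      have wb: "\<bar>f (x i) - (c + l \<bullet> x i)\<bar> \<le> w" if "i \<in> I" for i using Om[OF that] real by simp
      have w0: "w \<ge> 0" using wb[OF I0] by linarith
      have "measure lebesgue (convex hull S) \<le> 2 * w * (\<Prod>e\<in>Basis. (b0 - a0) \<bullet> e)"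
      proof (rule vol_bound[where c=c and l=l, OF w0 _ _ ab])
        show "finite S" using finI by (simp add: S_def)
        fix p assume "p \<in> S"
        then obtain i where i: "i \<in> I" and p: "p = (x i, f (x i))" by (auto simp: S_def)
        show "fst p \<in> cbox a0 b0 \<and> \<bar>snd p - (c + l \<bullet> fst p)\<bar> \<le> w"
          using xin[OF i] wb[OF i] by (simp add: p Qeq)
      qed
      also have "(\<Prod>e\<in>Basis. (b0 - a0) \<bullet> e) = (2 * d) ^ n"
        by (simp add: b0_def n_def)
      also have "2 * w * (2 * d) ^ n = C * w * d ^ n"
        by (simp add: C_def n_def power_mult_distrib)
      finally show ?thesis using real by simp
    next
      case PInf
      have "ereal C * Omega f (x 0) (2 * d) * ereal (d ^ n) = \<infinity>"
        using PInf dpos by (simp add: C_def)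
      then show ?thesis by (metis ereal_less_eq(1))
    next
      case MInf
      then show ?thesis using Om[OF I0] by simp
    qed
  qed
  then show "ereal (measure lebesgue (convex hull ((\<lambda>i. (x i, f (x i))) ` {0..DIM('a)+1})))
          \<le> ereal (2 ^ (DIM('a)+1)) * Omega f (x 0) (2 * diameter (x ` {0..DIM('a)+1}))
              * ereal (diameter (x ` {0..DIM('a)+1}) ^ DIM('a))"
    unfolding S_def d_def I_def C_def n_def .
qed

end
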